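(* Let $\mathbf{B}\in\dot{\mathbb{P}}(\mathbb{L}(\mathbf{C}))$. If $\mathbf{B}$ is singular for $\mathcal{D}(\mathbf{C},\Omega)$, then $\mathbf{B}$ is irreducible for $\mathcal{D}(\mathbf{C},\Omega)$.
   Context: Events are binary random variables on a population $\Omega$; $\overline{X}=1-X$; $\mathbb{L}(\mathbf{C})=\mathbf{C}\cup\{\overline{X}:X\in\mathbf{C}\}$; $\dot{\mathbb{P}}(\mathbb{L}(\mathbf{C}))$ is the set of subsets of $\mathbb{L}(\mathbf{C})$ not containing both $X$ and $\overline{X}$; $(L)_{\mathbf{c}}$ is the value of literal $L$ under assignment $\mathbf{c}$; $\bigwedge(\mathbf{B})=\min_{L\in\mathbf{B}}L$. Potential outcomes $\mathcal{D}(\mathbf{C},\Omega)$: $D_{\mathbf{c}}(\omega)\in\{0,1\}$. $\mathbf{B}$ is a sufficient cause for $D$ relative to $\mathbf{C}$ for $\omega^*$ if some $\mathbf{c}^*$ has $(\bigwedge(\mathbf{B}))_{\mathbf{c}^*}=1$ and $D_{\mathbf{c}}(\omega^* )=1$ whenever $(\bigwedge(\mathbf{B}))_{\mathbf{c}}=1$; minimal if no proper subset is such; singular for $\omega^*$ if it is a minimal sufficient cause for $\omega^*$ and no other $\mathbf{B}'\in\dot{\mathbb{P}}(\mathbb{L}(\mathbf{C}))$ is a minimal sufficient cause for $\omega^*$; singular for $\mathcal{D}(\mathbf{C},\Omega)$ if singular for some $\omega^*\in\Omega$. A sufficient cause representation $(\mathbf{A},\mathfrak{B})$ for $\mathcal{D}(\mathbf{C},\Omega)$: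 binary random variables $\mathbf{A}=\langle A_1,\dots,A_p\rangle$ on $\Omega$ unaffected by interventions on $\mathbf{C}$ and $\mathfrak{B}=\langle\mathbf{B}_1,\dots,\mathbf{B}_p\rangle$, $\mathbf{B}_i\in\dot{\mathbb{P}}(\mathbb{L}(\mathbf{C}))$, with $D_{\mathbf{c}}(\omega)=1$ iff some $j$ has $A_j(\omega)=1$ and $(\bigwedge(\mathbf{B}_j))_{\mathbf{c}}=1$. $\mathbf{B}$ is irreducible for $\mathcal{D}(\mathbf{C},\Omega)$ if every such representation has some $\mathbf{B}_i\supseteq\mathbf{B}$. *)

theory Defs
  imports Main "HOL-Library.FuncSet"
begin

text \<open>A literal over variables of type 'v is a pair (X, b): (X, True) stands for X,
  (X, False) stands for its complement 1 - X. Events are modelled as bool-valued.\<close>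
type_synonym 'v lit = "'v \<times> bool"

definition lits :: "'v set \<Rightarrow> 'v lit set" where
  "lits C = C \<times> (UNIV :: bool set)"

definition dotP :: "'v set \<Rightarrow> 'v lit set set" where
  "dotP C = {B. B \<subseteq> lits C \<and> \<not> (\<exists>x. (x, True) \<in> B \<and> (x, False) \<in> B)}"

definition assignments :: "'v set \<Rightarrow> ('v \<Rightarrow> bool) set" where
  "assignments C = C \<rightarrow>\<^sub>E (UNIV :: bool set)"

definition lit_val :: "('v \<Rightarrow> bool) \<Rightarrow> 'v lit \<Rightarrow> bool" where
  "lit_val c L = (c (fst L) = snd L)"

definition conj_val :: "'v lit set \<Rightarrow> ('v \<Rightarrow> bool) \<Rightarrow> bool" where
  "conj_val B c = (\<forall>L\<in>B. lit_val c L)"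

text \<open>D c w is the potential outcome D_c(w).\<close>
definition sufficient_cause ::
  "'v set \<Rightarrow> (('v \<Rightarrow> bool) \<Rightarrow> 'w \<Rightarrow> bool) \<Rightarrow> 'w \<Rightarrow> 'v lit set \<Rightarrow> bool" where
  "sufficient_cause C D w B =
     (B \<in> dotP C \<and> (\<exists>c\<in>assignments C. conj_val B c) \<and>
      (\<forall>c\<in>assignments C. conj_val B c \<longrightarrow> D c w))"

definition minimal_sufficient_cause ::
  "'v set \<Rightarrow> (('v \<Rightarrow> bool) \<Rightarrow> 'w \<Rightarrow> bool) \<Rightarrow> 'w \<Rightarrow> 'v lit set \<Rightarrow> bool" where
  "minimal_sufficient_cause C D w B =
     (sufficient_cause C D w B \<and> (\<forall>B'. B' \<subset> B \<longrightarrow> \<not> sufficient_cause C D w B'))"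

definition singular_for ::
  "'v set \<Rightarrow> (('v \<Rightarrow> bool) \<Rightarrow> 'w \<Rightarrow> bool) \<Rightarrow> 'w \<Rightarrow> 'v lit set \<Rightarrow> bool" where
  "singular_for C D w B =
     (minimal_sufficient_cause C D w B \<and>
      (\<forall>B'\<in>dotP C. minimal_sufficient_cause C D w B' \<longrightarrow> B' = B))"

definition singular ::
  "'v set \<Rightarrow> (('v \<Rightarrow> bool) \<Rightarrow> 'w \<Rightarrow> bool) \<Rightarrow> 'w set \<Rightarrow> 'v lit set \<Rightarrow> bool" where
  "singular C D \<Omega> B = (\<exists>w\<in>\<Omega>. singular_for C D w B)"

definition sc_representation ::
  "'v set \<Rightarrow> (('v \<Rightarrow> bool) \<Rightarrow> 'w \<Rightarrow> bool) \<Rightarrow> 'w set \<Rightarrow> nat \<Rightarrow> (nat \<Rightarrow> 'w \<Rightarrow> bool)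
    \<Rightarrow> (nat \<Rightarrow> 'v lit set) \<Rightarrow> bool" where
  "sc_representation C D \<Omega> p A Bs =
     ((\<forall>i<p. Bs i \<in> dotP C) \<and>
      (\<forall>c\<in>assignments C. \<forall>w\<in>\<Omega>. D c w \<longleftrightarrow> (\<exists>j<p. A j w \<and> conj_val (Bs j) c)))"

definition irreducible ::
  "'v set \<Rightarrow> (('v \<Rightarrow> bool) \<Rightarrow> 'w \<Rightarrow> bool) \<Rightarrow> 'w set \<Rightarrow> 'v lit set \<Rightarrow> bool" where
  "irreducible C D \<Omega> B =
     (\<forall>p A Bs. sc_representation C D \<Omega> p A Bs \<longrightarrow> (\<exists>i<p. B \<subseteq> Bs i))"

end

theory Submission
  imports Defs
begin

lemma exists_minimal:
  assumes "finite X" "sufficient_cause C D w X"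
  shows "\<exists>Y\<subseteq>X. minimal_sufficient_cause C D w Y"
  using assms
proof (induction X rule: finite_psubset_induct)
  case (psubset X)
  show ?case
  proof (cases "minimal_sufficient_cause C D w X")
    case True then show ?thesis by blast
  next
    case False
    then obtain Y where "Y \<subset> X" "sufficient_cause C D w Y"
      using psubset.prems unfolding minimal_sufficient_cause_def by blast
    have "finite Y" using \<open>Y \<subset> X\<close> psubset.hyps finite_subset by auto
    then obtain Z where "Z \<subseteq> Y" "minimal_sufficient_cause C D w Z"
      using psubset.IH[OF \<open>Y \<subset> X\<close>] \<open>sufficient_cause C D w Y\<close> by blast
    then show ?thesis using \<open>Y \<subset> X\<close> by blast
  qed
qed

theorem mainTheorem13:
  fixes C :: "'v set" and \<Omega> :: "'w set"
    and D :: "('v \<Rightarrow> bool) \<Rightarrow> 'w \<Rightarrow> bool" and B :: "'v lit set"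
  assumes "finite C"
    and "B \<in> dotP C"
    and "singular C D \<Omega> B"
  shows "irreducible C D \<Omega> B"
  unfolding irreducible_def
proof (intro allI impI)
  fix p A Bs
  assume rep: "sc_representation C D \<Omega> p A Bs"
  obtain w where w: "w \<in> \<Omega>" "singular_for C D w B"
    using assms(3) unfolding singular_def by blast
  hence msc: "minimal_sufficient_cause C D w B"
    and uniq: "\<And>B'. B' \<in> dotP C \<Longrightarrow> minimal_sufficient_cause C D w B' \<Longrightarrow> B' = B"
    unfolding singular_for_def by auto
  obtain c where c: "c \<in> assignments C" "conj_val B c" "D c w"
    using msc unfolding minimal_sufficient_cause_def sufficient_cause_def by blast
  have repD: "\<forall>c\<in>assignments C. \<forall>w\<in>\<Omega>. D c w \<longleftrightarrow> (\<exists>j<p. A j w \<and> conj_val (Bs j) c)"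
      using rep unfolding sc_representation_def by (rule conjunct2)
  obtain j where j: "j < p" "A j w" "conj_val (Bs j) c"
    using repD c(1,3) w(1) by blast
  have dj: "Bs j \<in> dotP C" using rep j(1) unfolding sc_representation_def by blast
  have suf: "sufficient_cause C D w (Bs j)"
    unfolding sufficient_cause_def
  proof (intro conjI ballI impI)
    show "Bs j \<in> dotP C" by (rule dj)
    show "\<exists>c\<in>assignments C. conj_val (Bs j) c" using c(1) j(3) by blast
  next
    fix c' assume "c' \<in> assignments C" "conj_val (Bs j) c'"
    moreover have "\<forall>c\<in>assignments C. \<forall>w\<in>\<Omega>. D c w \<longleftrightarrow> (\<exists>j<p. A j w \<and> conj_val (Bs j) c)"
      using rep unfolding sc_representation_def by (rule conjunct2)
    ultimately show "D c' w" using w(1) j(1,2) by blast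
  qed
  have fin: "finite (Bs j)"
  proof -
    have "Bs j \<subseteq> lits C" using dj unfolding dotP_def by blast
    moreover have "finite (lits C)" using assms(1) unfolding lits_def by simp
    ultimately show ?thesis by (rule finite_subset)
  qed
  obtain Y where Y: "Y \<subseteq> Bs j" "minimal_sufficient_cause C D w Y"
    using exists_minimal[OF fin suf] by blast
  have "Y \<in> dotP C"
    using Y(2) unfolding minimal_sufficient_cause_def sufficient_cause_def by blast
  hence "Y = B" using uniq Y(2) by blast
  thus "\<exists>i<p. B \<subseteq> Bs i" using Y(1) j(1) by blast
qed

end
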